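(* Consider the uncertain control-affine system $$\dot x = f(x) + B(x)\left[u - \varphi(x)^\top \theta\right],\qquad x\in\mathbb{R}^n,\ u\in\mathbb{R}^m,$$ with unknown constant parameter $\theta\in\mathbb{R}^p$, smooth $f:\mathbb{R}^n\to\mathbb{R}^n$, smooth $B:\mathbb{R}^n\to\mathbb{R}^{n\times m}$ with columns $b_1,\dots,b_m$, and smooth $\varphi:\mathbb{R}^n\to\mathbb{R}^{p\times m}$ with columns $\varphi_1,\dots,\varphi_m$ (so the uncertainty $\Delta(x)^\top\theta=B(x)\varphi(x)^\top\theta$ lies in the span of $B(x)$, i.e. satisfies the matching condition). Suppose a uniformly bounded Riemannian metric $M(x)$ satisfies the stronger CCM conditions (defined in the context) for the nominal system $\dot x = f(x)+B(x)u$ with rate $\lambda>0$. Then the same metric $M(x)$ satisfies the stronger CCM conditions, with the same rate $\lambda$, for the true system, i.e. for the system $\dot x = f_\theta(x) + B(x)u$ with drift $f_\theta(x) := f(x) - B(x)\varphi(x)^\top\theta$ (for the value of $\theta$).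
   Context: A Riemannian metric $M(x)$ is a smooth, symmetric, positive definite matrix function on $\mathbb{R}^n$; uniformly bounded means $\alpha_1 I\preceq M(x)\preceq \alpha_2 I$ for constants $0<\alpha_1\le\alpha_2$. For a vector field $v$, $\partial_v M := \sum_i \frac{\partial M}{\partial x_i} v_i$. For a control-affine system $\dot x = g(x) + B(x)u$ with columns $b_i$ of $B$, the metric $M$ satisfies the stronger CCM (control contraction metric) conditions with rate $\lambda>0$ if, for all $x$ and all $\delta_x\neq 0$ with $\delta_x^\top M(x)B(x)=0$, $$\delta_x^\top\left(\frac{\partial g}{\partial x}^\top M + M\frac{\partial g}{\partial x} + \dot M + 2\lambda M\right)\delta_x\le 0,\qquad \dot M := \partial_g M,$$ and, for each $i=1,\dots,m$, $\partial_{b_i}M + \frac{\partial b_i}{\partial x}^\top M + M\frac{\partial b_i}{\partial x} = 0$ (each $b_i$ is a Killing vector field for $M$). *)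

theory Defs
  imports "HOL-Analysis.Analysis"
begin

(* Directional derivative of a (Frechet differentiable) map g along v:
   (dirderiv g v) x = Dg(x) v.  For matrix-valued M this is
   \<partial>_v M (x) = sum_i dM/dx_i (x) v_i. *)
definition dirderiv :: "('a::real_normed_vector \<Rightarrow> 'b::real_normed_vector) \<Rightarrow> 'a \<Rightarrow> 'a \<Rightarrow> 'b" where
  "dirderiv g v = (\<lambda>x. frechet_derivative g (at x) v)"

primrec iter_dirderiv :: "'a list \<Rightarrow> ('a::real_normed_vector \<Rightarrow> 'b::real_normed_vector) \<Rightarrow> 'a \<Rightarrow> 'b" where
  "iter_dirderiv [] g = g"
| "iter_dirderiv (v # vs) g = iter_dirderiv vs (dirderiv g v)"

definition smooth :: "('a::real_normed_vector \<Rightarrow> 'b::real_normed_vector) \<Rightarrow> bool" where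
  "smooth g \<longleftrightarrow> (\<forall>vs x. iter_dirderiv vs g differentiable (at x))"

definition jac :: "(real^'n \<Rightarrow> real^'k) \<Rightarrow> real^'n \<Rightarrow> real^'n^'k" where
  "jac g x = matrix (frechet_derivative g (at x))"

definition unif_bounded_metric :: "(real^'n \<Rightarrow> real^'n^'n) \<Rightarrow> bool" where
  "unif_bounded_metric M \<longleftrightarrow> smooth M \<and> (\<forall>x. transpose (M x) = M x) \<and>
     (\<exists>a1 a2. 0 < a1 \<and> a1 \<le> a2 \<and>
        (\<forall>x v. a1 * (v \<bullet> v) \<le> v \<bullet> (M x *v v) \<and> v \<bullet> (M x *v v) \<le> a2 * (v \<bullet> v)))"

definition strong_ccm :: "(real^'n \<Rightarrow> real^'n^'n) \<Rightarrow> (real^'n \<Rightarrow> real^'n) \<Rightarrow> (real^'n \<Rightarrow> real^'m^'n) \<Rightarrow> real \<Rightarrow> bool" where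
  "strong_ccm M g B lam \<longleftrightarrow>
     (\<forall>x \<delta>. \<delta> \<noteq> 0 \<and> (\<delta> v* M x) v* B x = 0 \<longrightarrow>
        \<delta> \<bullet> ((transpose (jac g x) ** M x + M x ** jac g x + dirderiv M (g x) x
               + (2 * lam) *\<^sub>R M x) *v \<delta>) \<le> 0) \<and>
     (\<forall>i x. dirderiv M (column i (B x)) x
             + transpose (jac (\<lambda>y. column i (B y)) x) ** M x
             + M x ** jac (\<lambda>y. column i (B y)) x = 0)"

end

theory Submission imports Defs begin

lemma jac_apply:
  fixes g :: "real^'n \<Rightarrow> real^'k"
  assumes "g differentiable (at x)"
  shows "jac g x *v v = frechet_derivative g (at x) v"
proof -
  have "linear (frechet_derivative g (at x))" using linear_frechet_derivative[OF assms] .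
  then show ?thesis unfolding jac_def by (metis matrix_vector_mul(2))
qed

lemma quad_jac:
  fixes g :: "real^'n \<Rightarrow> real^'n" and Mx :: "real^'n^'n"
  assumes "g differentiable (at x)" and "transpose Mx = Mx"
  shows "\<delta> \<bullet> ((transpose (jac g x) ** Mx + Mx ** jac g x) *v \<delta>)
     = 2 * ((Mx *v \<delta>) \<bullet> (frechet_derivative g (at x) \<delta>))"
proof -
  let ?J = "jac g x"
  have a1: "(transpose ?J ** Mx) *v \<delta> = (Mx *v \<delta>) v* ?J"
    by (simp flip: matrix_vector_mul_assoc)
  have a: "\<delta> \<bullet> ((transpose ?J ** Mx) *v \<delta>) = (Mx *v \<delta>) \<bullet> (?J *v \<delta>)"
    unfolding a1 inner_commute[of \<delta>] by (rule dot_lmul_matrix)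
  have b1: "(Mx ** ?J) *v \<delta> = Mx *v (?J *v \<delta>)"
    by (simp flip: matrix_vector_mul_assoc)
  have b2: "\<delta> v* Mx = Mx *v \<delta>"
    using transpose_matrix_vector[of Mx \<delta>] assms(2) by simp
  have b: "\<delta> \<bullet> ((Mx ** ?J) *v \<delta>) = (Mx *v \<delta>) \<bullet> (?J *v \<delta>)"
    unfolding b1 dot_lmul_matrix[symmetric] b2 ..
  have "\<delta> \<bullet> ((transpose ?J ** Mx + Mx ** ?J) *v \<delta>) = \<delta> \<bullet> ((transpose ?J ** Mx) *v \<delta>) + \<delta> \<bullet> ((Mx ** ?J) *v \<delta>)"
    by (simp only: matrix_vector_mult_add_rdistrib inner_add_right)
  also have "\<dots> = 2 * ((Mx *v \<delta>) \<bullet> (?J *v \<delta>))" unfolding a b by simp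
  finally show ?thesis unfolding jac_apply[OF assms(1)] .
qed

lemma bl_column: "bounded_linear (\<lambda>A::real^'m^'n. column j A)"
proof -
  have "linear (\<lambda>A::real^'m^'n. column j A)"
    by (auto simp: linear_iff column_def vec_eq_iff)
  then show ?thesis by (simp add: linear_conv_bounded_linear)
qed

lemma bl_tmv: "bounded_linear (\<lambda>A::real^'m^'p. transpose A *v \<theta>)"
proof -
  have "linear (\<lambda>A::real^'m^'p. transpose A *v \<theta>)"
    by (auto simp: linear_iff transpose_def matrix_vector_mult_def vec_eq_iff
        sum.distrib algebra_simps sum_distrib_left)
  then show ?thesis by (simp add: linear_conv_bounded_linear)
qed

lemma sum_mv: "(sum A S) *v (v::real^'n) = sum (\<lambda>j. A j *v v) S"
  by (induction S rule: infinite_finite_induct) (auto simp: matrix_vector_mult_add_rdistrib)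

lemma smooth_diff: "smooth g \<Longrightarrow> g differentiable (at x)"
  unfolding smooth_def by (metis iter_dirderiv.simps(1))

theorem lemma1:
  fixes f :: "real^'n \<Rightarrow> real^'n"
    and B :: "real^'n \<Rightarrow> real^'m^'n"
    and \<phi> :: "real^'n \<Rightarrow> real^'m^'p"
    and M :: "real^'n \<Rightarrow> real^'n^'n"
    and \<theta> :: "real^'p"
    and lam :: real
  assumes "smooth f" and "smooth B" and "smooth \<phi>"
    and "unif_bounded_metric M"
    and "lam > 0"
    and "strong_ccm M f B lam"
  shows "strong_ccm M (\<lambda>x. f x - B x *v (transpose (\<phi> x) *v \<theta>)) B lam"
proof -
  have symM: "\<And>x. transpose (M x) = M x" using assms(4) unfolding unif_bounded_metric_def by blast
  have dM: "\<And>x. M differentiable (at x)" using assms(4) unfolding unif_bounded_metric_def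
    by (blast intro: smooth_diff)
  have df: "\<And>x. f differentiable (at x)" using assms(1) by (rule smooth_diff)
  have dB: "\<And>x. B differentiable (at x)" using assms(2) by (rule smooth_diff)
  have dphi: "\<And>x. \<phi> differentiable (at x)" using assms(3) by (rule smooth_diff)
  have K: "\<And>x \<delta>. \<delta> \<noteq> 0 \<Longrightarrow> (\<delta> v* M x) v* B x = 0 \<Longrightarrow>
        \<delta> \<bullet> ((transpose (jac f x) ** M x + M x ** jac f x + dirderiv M (f x) x
               + (2 * lam) *\<^sub>R M x) *v \<delta>) \<le> 0"
    and Kill: "\<And>i x. dirderiv M (column i (B x)) x
             + transpose (jac (\<lambda>y. column i (B y)) x) ** M x
             + M x ** jac (\<lambda>y. column i (B y)) x = 0"
    using assms(6) unfolding strong_ccm_def by simp_all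
  define c where "c = (\<lambda>y. transpose (\<phi> y) *v \<theta>)"
  define h where "h = (\<lambda>y. \<Sum>j\<in>UNIV. c y $ j *\<^sub>R column j (B y))"
  have geq: "(\<lambda>x. f x - B x *v (transpose (\<phi> x) *v \<theta>)) = (\<lambda>y. f y - h y)"
    by (auto simp: h_def c_def matrix_mult_sum scalar_mult_eq_scaleR)
  define C' where "C' = (\<lambda>x v. transpose (frechet_derivative \<phi> (at x) v) *v \<theta>)"
  have hc: "\<And>x. (c has_derivative C' x) (at x)"
    unfolding c_def C'_def
    by (rule bounded_linear.has_derivative[OF bl_tmv frechet_derivative_works[THEN iffD1, OF dphi]])
  have hcol: "\<And>j x. ((\<lambda>y. column j (B y)) has_derivative (\<lambda>v. column j (frechet_derivative B (at x) v))) (at x)"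
    by (rule bounded_linear.has_derivative[OF bl_column frechet_derivative_works[THEN iffD1, OF dB]])
  have dcol: "\<And>j x. (\<lambda>y. column j (B y)) differentiable (at x)"
    using hcol differentiable_def by blast
  have fcol: "\<And>j x. frechet_derivative (\<lambda>y. column j (B y)) (at x) = (\<lambda>v. column j (frechet_derivative B (at x) v))"
    using hcol frechet_derivative_at by metis
  define H' where "H' = (\<lambda>x v. \<Sum>j\<in>UNIV. c x $ j *\<^sub>R column j (frechet_derivative B (at x) v)
        + C' x v $ j *\<^sub>R column j (B x))"
  have hh: "\<And>x. (h has_derivative H' x) (at x)"
    unfolding h_def H'_def
    apply (rule has_derivative_sum)
    apply (rule has_derivative_scaleR)
     apply (rule bounded_linear.has_derivative[OF bounded_linear_vec_nth hc])
    apply (rule hcol)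
    done
  define F' where "F' = (\<lambda>x. frechet_derivative f (at x))"
  have hg: "\<And>x. ((\<lambda>y. f y - h y) has_derivative (\<lambda>v. F' x v - H' x v)) (at x)"
    unfolding F'_def by (rule has_derivative_diff[OF frechet_derivative_works[THEN iffD1, OF df] hh])
  have dg: "\<And>x. (\<lambda>y. f y - h y) differentiable (at x)"
    using hg differentiable_def by blast
  have fg: "\<And>x. frechet_derivative (\<lambda>y. f y - h y) (at x) = (\<lambda>v. F' x v - H' x v)"
    using hg frechet_derivative_at by metis
  have linM: "\<And>x. linear (frechet_derivative M (at x))"
    using dM linear_frechet_derivative by blast
  show ?thesis
    unfolding geq strong_ccm_def
  proof (intro conjI allI impI)
    fix i x show "dirderiv M (column i (B x)) x
             + transpose (jac (\<lambda>y. column i (B y)) x) ** M x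
             + M x ** jac (\<lambda>y. column i (B y)) x = 0" by (rule Kill)
  next
    fix x \<delta> :: "real^'n"
    assume a: "\<delta> \<noteq> 0 \<and> (\<delta> v* M x) v* B x = 0"
    define Md where "Md = M x *v \<delta>"
    define M' where "M' = frechet_derivative M (at x)"
    define B' where "B' = frechet_derivative B (at x)"
    have orth: "\<And>j. Md \<bullet> column j (B x) = 0"
    proof -
      fix j
      have "\<delta> v* M x = Md" unfolding Md_def by (metis symM transpose_matrix_vector)
      then have "(Md v* B x) $ j = 0" using a by simp
      then show "Md \<bullet> column j (B x) = 0"
        by (simp add: vector_matrix_mult_def inner_vec_def column_def mult.commute)
    qed
    have killq: "\<And>j. \<delta> \<bullet> (M' (column j (B x)) *v \<delta>) = - 2 * (Md \<bullet> column j (B' \<delta>))"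
    proof -
      fix j
      have "\<delta> \<bullet> ((dirderiv M (column j (B x)) x
             + transpose (jac (\<lambda>y. column j (B y)) x) ** M x
             + M x ** jac (\<lambda>y. column j (B y)) x) *v \<delta>) = 0" using Kill[of j x] by simp
      moreover have "\<delta> \<bullet> ((transpose (jac (\<lambda>y. column j (B y)) x) ** M x
             + M x ** jac (\<lambda>y. column j (B y)) x) *v \<delta>) = 2 * (Md \<bullet> column j (B' \<delta>))"
        using quad_jac[OF dcol[of j x] symM[of x], of \<delta>] fcol unfolding Md_def B'_def by simp
      ultimately show "\<delta> \<bullet> (M' (column j (B x)) *v \<delta>) = - 2 * (Md \<bullet> column j (B' \<delta>))"
        unfolding M'_def dirderiv_def
        by (simp add: matrix_vector_mult_add_rdistrib inner_add_right add.assoc)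
    qed
    have Tg: "\<delta> \<bullet> ((transpose (jac (\<lambda>y. f y - h y) x) ** M x + M x ** jac (\<lambda>y. f y - h y) x) *v \<delta>)
       = \<delta> \<bullet> ((transpose (jac f x) ** M x + M x ** jac f x) *v \<delta>)
         - 2 * (\<Sum>j\<in>UNIV. c x $ j * (Md \<bullet> column j (B' \<delta>)))"
    proof -
      have "Md \<bullet> H' x \<delta> = (\<Sum>j\<in>UNIV. c x $ j * (Md \<bullet> column j (B' \<delta>)))"
        unfolding H'_def B'_def by (simp add: inner_sum_right inner_add_right orth)
      then show ?thesis
        using quad_jac[OF dg[of x] symM[of x], of \<delta>] quad_jac[OF df[of x] symM[of x], of \<delta>] fg
        unfolding Md_def F'_def by (simp add: inner_diff_right)
    qed
    have Dg: "\<delta> \<bullet> (dirderiv M (f x - h x) x *v \<delta>)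
        = \<delta> \<bullet> (dirderiv M (f x) x *v \<delta>) + 2 * (\<Sum>j\<in>UNIV. c x $ j * (Md \<bullet> column j (B' \<delta>)))"
    proof -
      have "dirderiv M (f x - h x) x = M' (f x) - (\<Sum>j\<in>UNIV. c x $ j *\<^sub>R M' (column j (B x)))"
        unfolding dirderiv_def M'_def h_def
        using linM[of x] by (simp add: linear_diff linear_sum linear_scale)
      show ?thesis
      proof -
        have "\<delta> \<bullet> (dirderiv M (f x - h x) x *v \<delta>) = \<delta> \<bullet> (M' (f x) *v \<delta>)
           - (\<Sum>j\<in>UNIV. c x $ j * (\<delta> \<bullet> (M' (column j (B x)) *v \<delta>)))"
          unfolding \<open>dirderiv M (f x - h x) x = _\<close>
          by (simp add: matrix_vector_mult_diff_rdistrib sum_mv inner_diff_right inner_sum_right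
              flip: scaleR_matrix_vector_assoc)
        also have "\<dots> = \<delta> \<bullet> (M' (f x) *v \<delta>) + 2 * (\<Sum>j\<in>UNIV. c x $ j * (Md \<bullet> column j (B' \<delta>)))"
          by (simp add: killq sum_distrib_left sum_negf, rule sum.cong, simp_all)
        finally show ?thesis unfolding dirderiv_def M'_def .
      qed
    qed
    have "\<delta> \<bullet> ((transpose (jac f x) ** M x + M x ** jac f x + dirderiv M (f x) x
               + (2 * lam) *\<^sub>R M x) *v \<delta>) \<le> 0" using a by (intro K) auto
    then show "\<delta> \<bullet> ((transpose (jac (\<lambda>y. f y - h y) x) ** M x + M x ** jac (\<lambda>y. f y - h y) x
        + dirderiv M (f x - h x) x + (2 * lam) *\<^sub>R M x) *v \<delta>) \<le> 0"
      using Tg Dg by (simp add: matrix_vector_mult_add_rdistrib inner_add_right)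
  qed
qed

end
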